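(* Consider a wiretap setting with messages $\{1,\dots,M\}$, where $P_{Z|W=m}$ is the distribution of the eavesdropper observation $Z\in\mathcal{Z}$ when message $m$ is sent (for a fixed codebook), $P_Z:=\frac1M\sum_{m=1}^MP_{Z|W=m}$, and $\pi_Z$ is the distribution of $Z$ when no message is sent. Suppose the eavesdropper uses a measurable set $\mathcal{D}_0\subseteq\mathcal{Z}$ on which it declares that no message is sent, and upon observing $z\notin\mathcal{D}_0$ outputs a list of $T(z)$ messages; let $\mathcal{D}_m:=\{z\notin\mathcal{D}_0: m\text{ is in the list for }z\}$ and suppose $P_{Z|W=m}(\mathcal{D}_m)\ge1-\epsilon_m$ with $\epsilon_m\in[0,1]$; let $\epsilon:=\frac1M\sum_m\epsilon_m$. Let $A\in[1,\infty)$ and $\gamma\in[1,\infty)$. (i) If $\pi_Z(\mathcal{D}_0)\ge1-A^{-1}$, then $\frac1A\ge\frac1\gamma\big(1-\epsilon-E_\gamma(P_Z\|\pi_Z)\big)$. (ii) If $\mu_Z$ is any distribution on $\mathcal{Z}$ with $\mu_Z(\mathcal{D}_0)\ge1-A^{-1}$ and $\mu_Z(\mathcal{D}_0^c)>0$, and $T:=\frac1{\mu_Z(\mathcal{D}_0^c)}\int_{\mathcal{D}_0^c}T(z)\,d\mu_Z(z)$, then $$\frac{T}{MA}\ge\frac1\gamma\Big(1-\epsilon-\frac1M\sum_{m=1}^ME_\gamma(P_{Z|W=m}\|\mu_Z)\Big).$$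
   Context: $E_\gamma(P\|Q):=\sup_{\mathcal{A}}\{P(\mathcal{A})-\gamma Q(\mathcal{A})\}$. *)

theory Defs
  imports "HOL-Probability.Probability"
begin

definition E_gamma :: "real \<Rightarrow> 'a measure \<Rightarrow> 'a measure \<Rightarrow> real" where
  "E_gamma \<gamma> P Q = (SUP A \<in> sets P. measure P A - \<gamma> * measure Q A)"

definition mixture :: "'a measure \<Rightarrow> nat \<Rightarrow> (nat \<Rightarrow> 'a measure) \<Rightarrow> 'a measure" where
  "mixture N M P = measure_of (space N) (sets N)
     (\<lambda>A. (\<Sum>m\<in>{1..M}. emeasure (P m) A) / ennreal (real M))"

end

theory Submission
  imports Defs
begin

lemma mixture_emeasure:
  fixes N :: "'z measure"
  assumes P_prob: "\<And>m. m \<in> {1..M} \<Longrightarrow> prob_space (P m)"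
    and P_sets: "\<And>m. m \<in> {1..M} \<Longrightarrow> sets (P m) = sets N"
    and B: "B \<in> sets N"
  shows "emeasure (mixture N M P) B = (\<Sum>m\<in>{1..M}. emeasure (P m) B) / ennreal (real M)"
  unfolding mixture_def
proof (rule emeasure_measure_of_sigma)
  show "sigma_algebra (space N) (sets N)" by (rule sets.sigma_algebra_axioms)
  show "positive (sets N) (\<lambda>A. (\<Sum>m\<in>{1..M}. emeasure (P m) A) / ennreal (real M))"
    unfolding positive_def by simp
  show "countably_additive (sets N) (\<lambda>A. (\<Sum>m\<in>{1..M}. emeasure (P m) A) / ennreal (real M))"
    unfolding countably_additive_def
  proof (intro allI impI)
    fix F :: "nat \<Rightarrow> 'z set"
    assume F: "range F \<subseteq> sets N" "disjoint_family F"
    have "(\<Sum>i. (\<Sum>m\<in>{1..M}. emeasure (P m) (F i)) / ennreal (real M))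
        = (\<Sum>i. (\<Sum>m\<in>{1..M}. emeasure (P m) (F i))) / ennreal (real M)"
      by (rule ennreal_suminf_divide)
    also have "(\<Sum>i. (\<Sum>m\<in>{1..M}. emeasure (P m) (F i))) = (\<Sum>m\<in>{1..M}. \<Sum>i. emeasure (P m) (F i))"
      by (rule suminf_sum) simp
    also have "\<dots> = (\<Sum>m\<in>{1..M}. emeasure (P m) (\<Union>i. F i))"
      by (rule sum.cong[OF refl], rule suminf_emeasure) (use F P_sets in auto)
    finally show "(\<Sum>i. (\<Sum>m\<in>{1..M}. emeasure (P m) (F i)) / ennreal (real M))
        = (\<Sum>m\<in>{1..M}. emeasure (P m) (\<Union>i. F i)) / ennreal (real M)" .
  qed
  show "B \<in> sets N" by fact
qed

lemma mixture_measure: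
  fixes N :: "'z measure"
  assumes M_pos: "M \<ge> 1"
    and P_prob: "\<And>m. m \<in> {1..M} \<Longrightarrow> prob_space (P m)"
    and P_sets: "\<And>m. m \<in> {1..M} \<Longrightarrow> sets (P m) = sets N"
    and B: "B \<in> sets N"
  shows "measure (mixture N M P) B = (\<Sum>m\<in>{1..M}. measure (P m) B) / real M"
proof -
  have "(\<Sum>m\<in>{1..M}. emeasure (P m) B) = (\<Sum>m\<in>{1..M}. ennreal (measure (P m) B))"
    by (rule sum.cong[OF refl]) (simp add: P_prob prob_space.finite_measure finite_measure.emeasure_eq_measure)
  also have "\<dots> = ennreal (\<Sum>m\<in>{1..M}. measure (P m) B)"
    by (rule sum_ennreal) simp
  finally have "emeasure (mixture N M P) B = ennreal (\<Sum>m\<in>{1..M}. measure (P m) B) / ennreal (real M)"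
    using mixture_emeasure[OF P_prob P_sets B] by simp
  also have "\<dots> = ennreal ((\<Sum>m\<in>{1..M}. measure (P m) B) / real M)"
    using M_pos by (intro divide_ennreal) (auto intro: sum_nonneg)
  finally show ?thesis unfolding measure_def
    by (simp add: sum_nonneg)
qed

theorem mainTheorem17:
  fixes N :: "'z measure"
    and M :: nat
    and P :: "nat \<Rightarrow> 'z measure"
    and \<pi> :: "'z measure"
    and D0 :: "'z set"
    and L :: "'z \<Rightarrow> nat set"
    and \<epsilon>m :: "nat \<Rightarrow> real"
    and A \<gamma> :: real
  assumes M_pos: "M \<ge> 1"
    and P_prob: "\<And>m. m \<in> {1..M} \<Longrightarrow> prob_space (P m)"
    and P_sets: "\<And>m. m \<in> {1..M} \<Longrightarrow> sets (P m) = sets N"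
    and pi_prob: "prob_space \<pi>"
    and pi_sets: "sets \<pi> = sets N"
    and D0_meas: "D0 \<in> sets N"
    and L_sub: "\<And>z. z \<in> space N - D0 \<Longrightarrow> L z \<subseteq> {1..M}"
    and Dm_meas: "\<And>m. m \<in> {1..M} \<Longrightarrow> {z \<in> space N - D0. m \<in> L z} \<in> sets N"
    and eps_range: "\<And>m. m \<in> {1..M} \<Longrightarrow> 0 \<le> \<epsilon>m m \<and> \<epsilon>m m \<le> 1"
    and decode: "\<And>m. m \<in> {1..M} \<Longrightarrow>
                   measure (P m) {z \<in> space N - D0. m \<in> L z} \<ge> 1 - \<epsilon>m m"
    and A_ge: "A \<ge> 1"
    and gamma_ge: "\<gamma> \<ge> 1"
  defines "\<epsilon> \<equiv> (\<Sum>m\<in>{1..M}. \<epsilon>m m) / real M"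
  shows "(measure \<pi> D0 \<ge> 1 - 1 / A \<longrightarrow>
            1 / A \<ge> (1 / \<gamma>) * (1 - \<epsilon> - E_gamma \<gamma> (mixture N M P) \<pi>))
       \<and> (\<forall>\<mu> :: 'z measure. prob_space \<mu> \<and> sets \<mu> = sets N
            \<and> measure \<mu> D0 \<ge> 1 - 1 / A \<and> measure \<mu> (space N - D0) > 0 \<longrightarrow>
            (let T = (\<integral>z\<in>space N - D0. real (card (L z)) \<partial>\<mu>) / measure \<mu> (space N - D0)
             in T / (real M * A) \<ge>
                (1 / \<gamma>) * (1 - \<epsilon> - (\<Sum>m\<in>{1..M}. E_gamma \<gamma> (P m) \<mu>) / real M)))"
proof -
  define D where "D = space N - D0"
  define Dm where "Dm m = {z \<in> space N - D0. m \<in> L z}" for m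
  have D_meas: "D \<in> sets N" using D0_meas unfolding D_def by auto
  have Dm_sub: "Dm m \<subseteq> D" for m unfolding Dm_def D_def by auto
  have Mr: "real M \<ge> 1" using M_pos by simp
  have gpos: "\<gamma> > 0" using gamma_ge by simp
  have Apos: "A > 0" using A_ge by simp
  have epsdef: "(\<Sum>m\<in>{1..M}. 1 - \<epsilon>m m) / real M = 1 - \<epsilon>"
    using Mr unfolding \<epsilon>_def by (simp add: sum_subtractf field_simps)
  have Elow: "E_gamma \<gamma> Q R \<ge> measure Q B - \<gamma> * measure R B"
    if "finite_measure Q" "B \<in> sets Q" for Q R :: "'z measure" and B
    unfolding E_gamma_def
  proof (rule cSUP_upper)
    show "B \<in> sets Q" by fact
    show "bdd_above ((\<lambda>A. measure Q A - \<gamma> * measure R A) ` sets Q)"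
    proof (rule bdd_aboveI2)
      fix X assume "X \<in> sets Q"
      have "measure Q X \<le> measure Q (space Q)"
        using that `X \<in> sets Q` sets.sets_into_space by (intro finite_measure.finite_measure_mono) auto
      moreover have "\<gamma> * measure R X \<ge> 0" using gpos by simp
      ultimately show "measure Q X - \<gamma> * measure R X \<le> measure Q (space Q)" by linarith
    qed
  qed
  have PD: "measure (P m) D \<ge> 1 - \<epsilon>m m" if "m \<in> {1..M}" for m
  proof -
    interpret prob_space "P m" using P_prob that by simp
    have "measure (P m) (Dm m) \<le> measure (P m) D"
      using Dm_sub D_meas P_sets that by (intro finite_measure_mono) auto
    thus ?thesis using decode[OF that] unfolding Dm_def by simp
  qed
  have part1: "measure \<pi> D0 \<ge> 1 - 1 / A \<longrightarrow>
            1 / A \<ge> (1 / \<gamma>) * (1 - \<epsilon> - E_gamma \<gamma> (mixture N M P) \<pi>)"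
  proof
    assume h: "measure \<pi> D0 \<ge> 1 - 1 / A"
    have spi: "space \<pi> = space N" using pi_sets by (rule sets_eq_imp_space_eq)
    have piD: "measure \<pi> D \<le> 1 / A"
      using prob_space.prob_compl[OF pi_prob, of D0] D0_meas pi_sets h spi
      unfolding D_def by simp
    have smix: "sets (mixture N M P) = sets N"
      unfolding mixture_def by (simp add: sets.sets_measure_of_eq)
    have mixD: "measure (mixture N M P) D = (\<Sum>m\<in>{1..M}. measure (P m) D) / real M"
      by (rule mixture_measure[OF M_pos P_prob P_sets D_meas])
    have "(\<Sum>m\<in>{1..M}. 1 - \<epsilon>m m) \<le> (\<Sum>m\<in>{1..M}. measure (P m) D)"
      by (rule sum_mono) (rule PD)
    hence mixge: "measure (mixture N M P) D \<ge> 1 - \<epsilon>"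
      using Mr mixD epsdef by (metis divide_right_mono of_nat_0_le_iff)
    have fm: "finite_measure (mixture N M P)"
    proof (rule finite_measureI)
      have "space (mixture N M P) = space N" using smix by (rule sets_eq_imp_space_eq)
      hence "emeasure (mixture N M P) (space (mixture N M P))
          = (\<Sum>m\<in>{1..M}. emeasure (P m) (space N)) / ennreal (real M)"
        using mixture_emeasure[OF P_prob P_sets, where B="space N"] by simp
      also have "\<dots> \<noteq> \<infinity>"
      proof -
        have "(\<Sum>m\<in>{1..M}. emeasure (P m) (space N)) \<noteq> \<infinity>"
        proof -
          have "(\<Sum>m\<in>{1..M}. emeasure (P m) (space N)) = (\<Sum>m\<in>{1..M}. ennreal (measure (P m) (space N)))"
            by (rule sum.cong[OF refl]) (simp add: P_prob prob_space.finite_measure finite_measure.emeasure_eq_measure)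
          also have "\<dots> = ennreal (\<Sum>m\<in>{1..M}. measure (P m) (space N))"
            by (rule sum_ennreal) simp
          finally show ?thesis by simp
        qed
        moreover have "ennreal (real M) \<noteq> 0" using Mr by simp
        ultimately show ?thesis by (simp add: divide_ennreal_def ennreal_mult_eq_top_iff)
      qed
      finally show "emeasure (mixture N M P) (space (mixture N M P)) \<noteq> \<infinity>" .
    qed
    have "E_gamma \<gamma> (mixture N M P) \<pi> \<ge> measure (mixture N M P) D - \<gamma> * measure \<pi> D"
      using Elow[OF fm] D_meas smix by simp
    hence "E_gamma \<gamma> (mixture N M P) \<pi> \<ge> 1 - \<epsilon> - \<gamma> / A"
      using mixge piD gpos mult_left_mono[OF piD, of \<gamma>] by simp
    hence "1 - \<epsilon> - E_gamma \<gamma> (mixture N M P) \<pi> \<le> \<gamma> / A" by simp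
    hence "(1 / \<gamma>) * (1 - \<epsilon> - E_gamma \<gamma> (mixture N M P) \<pi>) \<le> (1 / \<gamma>) * (\<gamma> / A)"
      using gpos by (intro mult_left_mono) auto
    thus "1 / A \<ge> (1 / \<gamma>) * (1 - \<epsilon> - E_gamma \<gamma> (mixture N M P) \<pi>)"
      using gpos by simp
  qed
  have part2: "\<forall>\<mu> :: 'z measure. prob_space \<mu> \<and> sets \<mu> = sets N
            \<and> measure \<mu> D0 \<ge> 1 - 1 / A \<and> measure \<mu> (space N - D0) > 0 \<longrightarrow>
            (let T = (\<integral>z\<in>space N - D0. real (card (L z)) \<partial>\<mu>) / measure \<mu> (space N - D0)
             in T / (real M * A) \<ge>
                (1 / \<gamma>) * (1 - \<epsilon> - (\<Sum>m\<in>{1..M}. E_gamma \<gamma> (P m) \<mu>) / real M))"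
  proof (intro allI impI)
    fix \<mu> :: "'z measure"
    assume h: "prob_space \<mu> \<and> sets \<mu> = sets N
            \<and> measure \<mu> D0 \<ge> 1 - 1 / A \<and> measure \<mu> (space N - D0) > 0"
    interpret mu: prob_space \<mu> using h by simp
    have smu: "sets \<mu> = sets N" using h by simp
    have spmu: "space \<mu> = space N" using smu by (rule sets_eq_imp_space_eq)
    have muD: "measure \<mu> D \<le> 1 / A"
      using mu.prob_compl[of D0] D0_meas smu h spmu unfolding D_def by simp
    have muDpos: "measure \<mu> D > 0" using h unfolding D_def by simp
    define S where "S = (\<integral>z\<in>space N - D0. real (card (L z)) \<partial>\<mu>)"
    have ptw: "indicator D z * real (card (L z)) = (\<Sum>m\<in>{1..M}. indicator (Dm m) z)" for z :: 'z
    proof (cases "z \<in> D")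
      case True
      hence Ls: "L z \<subseteq> {1..M}" using L_sub unfolding D_def by auto
      have "(\<Sum>m\<in>{1..M}. indicator (Dm m) z :: real) = (\<Sum>m\<in>{1..M}. if m \<in> L z then 1 else 0)"
        using True unfolding Dm_def D_def by (intro sum.cong) (auto simp: indicator_def)
      also have "\<dots> = real (card ({1..M} \<inter> L z))"
        by (simp add: sum.If_cases)
      also have "{1..M} \<inter> L z = L z" using Ls by auto
      finally show ?thesis using True by simp
    next
      case False
      thus ?thesis using Dm_sub by (auto simp: indicator_def intro!: sum.neutral)
    qed
    have Dm_mu: "m \<in> {1..M} \<Longrightarrow> Dm m \<in> sets \<mu>" for m using Dm_meas smu unfolding Dm_def by simp
    have S_eq: "S = (\<Sum>m\<in>{1..M}. measure \<mu> (Dm m))"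
    proof -
      have "S = (\<integral>z. (\<Sum>m\<in>{1..M}. indicator (Dm m) z) \<partial>\<mu>)"
        unfolding S_def set_lebesgue_integral_def D_def[symmetric]
        using ptw by (simp add: mult.commute)
      also have "\<dots> = (\<Sum>m\<in>{1..M}. (\<integral>z. indicator (Dm m) z \<partial>\<mu>))"
        by (rule Bochner_Integration.integral_sum) (auto intro!: integrable_real_indicator Dm_mu simp: mu.emeasure_eq_measure)
      also have "\<dots> = (\<Sum>m\<in>{1..M}. measure \<mu> (Dm m))"
        by (rule sum.cong[OF refl]) (simp add: Dm_mu)
      finally show ?thesis .
    qed
    have Seq: "(\<integral>z\<in>D. real (card (L z)) \<partial>\<mu>) = S" by (simp add: S_def D_def)
    have S_nn: "S \<ge> 0" using S_eq by (simp add: sum_nonneg)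
    have Ebound: "E_gamma \<gamma> (P m) \<mu> \<ge> (1 - \<epsilon>m m) - \<gamma> * measure \<mu> (Dm m)" if "m \<in> {1..M}" for m
    proof -
      have "E_gamma \<gamma> (P m) \<mu> \<ge> measure (P m) (Dm m) - \<gamma> * measure \<mu> (Dm m)"
        using Elow[of "P m" "Dm m" \<mu>] P_prob[OF that] P_sets[OF that] Dm_meas[OF that]
        unfolding Dm_def by (simp add: prob_space.finite_measure)
      thus ?thesis using decode[OF that] unfolding Dm_def by simp
    qed
    have "(\<Sum>m\<in>{1..M}. (1 - \<epsilon>m m) - \<gamma> * measure \<mu> (Dm m)) \<le> (\<Sum>m\<in>{1..M}. E_gamma \<gamma> (P m) \<mu>)"
      by (rule sum_mono) (rule Ebound)
    hence "(\<Sum>m\<in>{1..M}. 1 - \<epsilon>m m) - \<gamma> * S \<le> (\<Sum>m\<in>{1..M}. E_gamma \<gamma> (P m) \<mu>)"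
      by (simp add: sum_subtractf sum_distrib_left S_eq)
    hence "((\<Sum>m\<in>{1..M}. 1 - \<epsilon>m m) - \<gamma> * S) / real M \<le> (\<Sum>m\<in>{1..M}. E_gamma \<gamma> (P m) \<mu>) / real M"
      using Mr by (intro divide_right_mono) auto
    hence "1 - \<epsilon> - \<gamma> * S / real M \<le> (\<Sum>m\<in>{1..M}. E_gamma \<gamma> (P m) \<mu>) / real M"
      using epsdef by (simp add: diff_divide_distrib)
    hence "1 - \<epsilon> - (\<Sum>m\<in>{1..M}. E_gamma \<gamma> (P m) \<mu>) / real M \<le> \<gamma> * (S / real M)" by simp
    hence rhs: "(1 / \<gamma>) * (1 - \<epsilon> - (\<Sum>m\<in>{1..M}. E_gamma \<gamma> (P m) \<mu>) / real M) \<le> S / real M"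
      using gpos by (simp add: field_simps)
    have "measure \<mu> D * A \<le> 1" using muD Apos by (simp add: field_simps)
    hence "S * (measure \<mu> D * A) \<le> S" using S_nn by (simp add: mult_left_le)
    hence "S / real M \<le> (S / measure \<mu> D) / (real M * A)"
      using muDpos Apos Mr by (simp add: field_simps)
    with rhs show "let T = (\<integral>z\<in>space N - D0. real (card (L z)) \<partial>\<mu>) / measure \<mu> (space N - D0)
             in T / (real M * A) \<ge>
                (1 / \<gamma>) * (1 - \<epsilon> - (\<Sum>m\<in>{1..M}. E_gamma \<gamma> (P m) \<mu>) / real M)"
      unfolding Let_def D_def[symmetric] Seq by linarith
  qed
  show ?thesis using part1 part2 by blast
qed

end
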